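(* Let $\{x_k\}_{k\ge 0}$ be a log-convex sequence and define $z_n=\sum_{k=0}^{n}S(n,k)x_k$ for $n\ge 0$. Then $\{z_n\}_{n\ge 0}$ is log-convex. That is, the Stirling transformation of the second kind preserves log-convexity.
   Context: $S(n,k)$ denotes the Stirling number of the second kind: the number of partitions of $\{1,\dots,n\}$ into exactly $k$ blocks, with $S(0,0)=1$ and $S(n,k)=0$ unless $0\le k\le n$. A sequence $a_0,a_1,\ldots$ of nonnegative real numbers is log-convex if $a_{k-1}a_{k+1}\ge a_k^2$ for all $k\ge 1$. *)

theory Defs
  imports Complex_Main "HOL-Combinatorics.Stirling"
begin

definition log_convex :: "(nat \<Rightarrow> real) \<Rightarrow> bool" where
  "log_convex a \<longleftrightarrow> (\<forall>k. a k \<ge> 0) \<and> (\<forall>k\<ge>1. a (k - 1) * a (k + 1) \<ge> (a k)^2)"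

end

theory Submission
  imports Defs
begin

lemma Stirling_binom:
  "Stirling (Suc n) (Suc j) = (\<Sum>k\<le>n. (n choose k) * Stirling k j)"
proof (induction n arbitrary: j)
  case 0
  then show ?case by (cases j) auto
next
  case (Suc n)
  have split: "(\<Sum>k\<le>Suc n. (Suc n choose k) * f k) =
     (\<Sum>k\<le>n. (n choose k) * f k) + (\<Sum>k\<le>n. (n choose k) * f (Suc k))" for f :: "nat \<Rightarrow> nat"
  proof -
    have "(\<Sum>k\<le>Suc n. (Suc n choose k) * f k) = f 0 + (\<Sum>k\<le>n. (Suc n choose Suc k) * f (Suc k))"
      by (subst sum.atMost_Suc_shift) (simp del: binomial_Suc_Suc)
    also have "\<dots> = f 0 + (\<Sum>k\<le>n. (n choose Suc k) * f (Suc k)) + (\<Sum>k\<le>n. (n choose k) * f (Suc k))"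
      by (simp add: sum.distrib algebra_simps)
    also have "f 0 + (\<Sum>k\<le>n. (n choose Suc k) * f (Suc k)) = (\<Sum>k\<le>Suc n. (n choose k) * f k)"
      by (subst sum.atMost_Suc_shift) simp
    also have "\<dots> = (\<Sum>k\<le>n. (n choose k) * f k)"
      by simp
    finally show ?thesis .
  qed
  show ?case
  proof (cases j)
    case 0
    have "(\<Sum>k\<le>n. (n choose k) * Stirling (Suc k) 0) = 0" by simp
    then show ?thesis using Suc.IH[of 0] 0 by (simp only: split) simp
  next
    case (Suc i)
    have "(\<Sum>k\<le>n. (n choose k) * Stirling (Suc k) (Suc i))
        = Suc i * (\<Sum>k\<le>n. (n choose k) * Stirling k (Suc i)) + (\<Sum>k\<le>n. (n choose k) * Stirling k i)"
      by (simp add: sum.distrib sum_distrib_left algebra_simps)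
    then show ?thesis using Suc.IH[of i] Suc.IH[of "Suc i"] Suc
      by (simp only: split) simp
  qed
qed

definition zt :: "(nat \<Rightarrow> real) \<Rightarrow> nat \<Rightarrow> real" where
  "zt x n = (\<Sum>k=0..n. real (Stirling n k) * x k)"

definition bt :: "(nat \<Rightarrow> real) \<Rightarrow> nat \<Rightarrow> real" where
  "bt w m = (\<Sum>k\<le>m. real (m choose k) * w k)"

definition LC :: "nat \<Rightarrow> (nat \<Rightarrow> real) \<Rightarrow> bool" where
  "LC N w \<longleftrightarrow> (\<forall>k. w k \<ge> 0) \<and> (\<forall>k. 1 \<le> k \<longrightarrow> k + 1 \<le> N \<longrightarrow> w (k-1) * w (k+1) \<ge> (w k)^2)"

lemma sum_ineq:
  fixes a0 a1 a2 b0 b1 b2 :: real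
  assumes "a0 \<ge> 0" "a1 \<ge> 0" "a2 \<ge> 0" "b0 \<ge> 0" "b1 \<ge> 0" "b2 \<ge> 0"
    "a0 * a2 \<ge> a1^2" "b0 * b2 \<ge> b1^2"
  shows "(a0 + b0) * (a2 + b2) \<ge> (a1 + b1)^2"
proof -
  define p where "p = a0 * b2"
  define q where "q = b0 * a2"
  have pq: "p * q \<ge> (a1 * b1)^2"
  proof -
    have "p * q = (a0 * a2) * (b0 * b2)" by (simp add: p_def q_def algebra_simps)
    also have "\<dots> \<ge> a1^2 * b1^2" using assms by (intro mult_mono) auto
    finally show ?thesis by (simp add: power_mult_distrib)
  qed
  have "p \<ge> 0" "q \<ge> 0" using assms by (auto simp: p_def q_def)
  have "0 \<le> (p - q)^2" by simp
  hence "(p + q)^2 \<ge> 4 * p * q" by (simp add: power2_eq_square algebra_simps)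
  hence "(p + q)^2 \<ge> (2 * a1 * b1)^2" using pq by (simp add: power_mult_distrib)
  hence "p + q \<ge> 2 * a1 * b1"
    using \<open>p \<ge> 0\<close> \<open>q \<ge> 0\<close> by (meson add_nonneg_nonneg power2_le_imp_le)
  thus ?thesis using assms by (simp add: p_def q_def power2_eq_square algebra_simps)
qed

lemma LC_sum: "LC N a \<Longrightarrow> LC N b \<Longrightarrow> LC N (\<lambda>k. a k + b k)"
  unfolding LC_def by (auto intro!: sum_ineq add_nonneg_nonneg)

lemma LC_shift: "LC (Suc N) w \<Longrightarrow> LC N (\<lambda>k. w (Suc k))"
  unfolding LC_def
proof (intro conjI allI impI)
  fix k assume h: "(\<forall>k. 0 \<le> w k) \<and> (\<forall>k. 1 \<le> k \<longrightarrow> k + 1 \<le> Suc N \<longrightarrow> (w k)\<^sup>2 \<le> w (k - 1) * w (k + 1))"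
  then show "0 \<le> w (Suc k)" by auto
  assume "1 \<le> k" "k + 1 \<le> N"
  then show "(w (Suc k))\<^sup>2 \<le> w (Suc (k - 1)) * w (Suc (k + 1))"
    using h[THEN conjunct2, rule_format, of "Suc k"] by auto
qed

lemma bt_Suc: "bt w (Suc m) = bt (\<lambda>k. w k + w (Suc k)) m"
proof -
  have "bt w (Suc m) = w 0 + (\<Sum>k\<le>m. real (Suc m choose Suc k) * w (Suc k))"
    unfolding bt_def by (subst sum.atMost_Suc_shift) (simp del: binomial_Suc_Suc)
  also have "\<dots> = w 0 + (\<Sum>k\<le>m. real (m choose Suc k) * w (Suc k)) + (\<Sum>k\<le>m. real (m choose k) * w (Suc k))"
    by (simp add: sum.distrib algebra_simps)
  also have "w 0 + (\<Sum>k\<le>m. real (m choose Suc k) * w (Suc k)) = (\<Sum>k\<le>Suc m. real (m choose k) * w k)"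
    by (subst sum.atMost_Suc_shift) simp
  also have "\<dots> = (\<Sum>k\<le>m. real (m choose k) * w k)"
    by simp
  finally show ?thesis unfolding bt_def by (simp add: sum.distrib algebra_simps)
qed

lemma bt_lc: "LC (Suc (Suc m)) w \<Longrightarrow> bt w m * bt w (Suc (Suc m)) \<ge> (bt w (Suc m))^2"
proof (induction m arbitrary: w)
  case 0
  then have "w 0 * w 2 \<ge> (w 1)^2" "w 0 \<ge> 0" "w 1 \<ge> 0" unfolding LC_def numeral_2_eq_2 by (auto dest: spec[of _ 1])
  moreover have "bt w 0 = w 0" "bt w 1 = w 0 + w 1" "bt w 2 = w 0 + 2 * w 1 + w 2"
    unfolding bt_def by (simp_all add: numeral_2_eq_2)
  ultimately show ?case by (simp add: numeral_2_eq_2 power2_eq_square algebra_simps)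
next
  case (Suc m)
  have a: "LC (Suc (Suc m)) (\<lambda>k. w (Suc k))" using LC_shift Suc.prems by blast
  have b: "LC (Suc (Suc m)) w" using Suc.prems unfolding LC_def by auto
  have "LC (Suc (Suc m)) (\<lambda>k. w k + w (Suc k))" using LC_sum[OF b a] .
  from Suc.IH[OF this] show ?case by (simp add: bt_Suc)
qed

lemma zt_Suc: "zt x (Suc n) = bt (\<lambda>k. zt (\<lambda>i. x (Suc i)) k) n"
proof -
  have "zt x (Suc n) = (\<Sum>k\<le>Suc n. real (Stirling (Suc n) k) * x k)"
    unfolding zt_def by (simp add: atLeast0AtMost)
  also have "\<dots> = (\<Sum>j\<le>n. real (Stirling (Suc n) (Suc j)) * x (Suc j))"
    by (subst sum.atMost_Suc_shift) (simp del: Stirling.simps(4))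
  also have "\<dots> = (\<Sum>j\<le>n. \<Sum>k\<le>n. real (n choose k) * (real (Stirling k j) * x (Suc j)))"
    apply (intro sum.cong refl)
    apply (simp only: Stirling_binom of_nat_sum of_nat_mult sum_distrib_right)
    by (simp add: mult.assoc)
  also have "\<dots> = (\<Sum>k\<le>n. real (n choose k) * (\<Sum>j\<le>n. real (Stirling k j) * x (Suc j)))"
    by (subst sum.swap) (simp add: sum_distrib_left)
  also have "\<dots> = (\<Sum>k\<le>n. real (n choose k) * zt (\<lambda>i. x (Suc i)) k)"
  proof (intro sum.cong refl)
    fix k assume "k \<in> {..n}"
    hence "{..n} = {0..k} \<union> {k<..n}" by auto
    hence "(\<Sum>j\<le>n. real (Stirling k j) * x (Suc j)) = (\<Sum>j=0..k. real (Stirling k j) * x (Suc j))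
        + (\<Sum>j\<in>{k<..n}. real (Stirling k j) * x (Suc j))"
      by (simp add: sum.union_disjoint ivl_disj_int)
    also have "(\<Sum>j\<in>{k<..n}. real (Stirling k j) * x (Suc j)) = 0" by simp
    finally show "real (n choose k) * (\<Sum>j\<le>n. real (Stirling k j) * x (Suc j)) = real (n choose k) * zt (\<lambda>i. x (Suc i)) k"
      unfolding zt_def by simp
  qed
  finally show ?thesis unfolding bt_def .
qed

lemma zt_nonneg: "(\<forall>k. x k \<ge> 0) \<Longrightarrow> zt x n \<ge> 0"
  unfolding zt_def by (auto intro!: sum_nonneg)

lemma log_convex_shift: "log_convex x \<Longrightarrow> log_convex (\<lambda>i. x (Suc i))"
  unfolding log_convex_def
proof (intro conjI allI impI)
  fix k assume h: "(\<forall>k. 0 \<le> x k) \<and> (\<forall>k\<ge>1. (x k)\<^sup>2 \<le> x (k - 1) * x (k + 1))"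
  then show "0 \<le> x (Suc k)" by auto
  assume "1 \<le> k"
  then show "(x (Suc k))\<^sup>2 \<le> x (Suc (k - 1)) * x (Suc (k + 1))"
    using h[THEN conjunct2, rule_format, of "Suc k"] by auto
qed

lemma main:
  "1 \<le> n \<Longrightarrow> log_convex x \<Longrightarrow> zt x (n - 1) * zt x (n + 1) \<ge> (zt x n)^2"
proof (induction n arbitrary: x rule: less_induct)
  case (less n)
  have x0: "\<forall>k. x k \<ge> 0" and xl: "\<And>k. k \<ge> 1 \<Longrightarrow> x (k-1) * x (k+1) \<ge> (x k)^2"
    using less.prems unfolding log_convex_def by auto
  show ?case
  proof (cases "n = 1")
    case True
    have "zt x 0 = x 0" "zt x 1 = x 1" "zt x 2 = x 1 + x 2"
      unfolding zt_def by (simp_all add: numeral_2_eq_2)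
    moreover have "x 0 * x 2 \<ge> (x 1)^2" using xl[of 1] by (simp add: numeral_2_eq_2)
    moreover have "x 0 * x 1 \<ge> 0" using x0 by simp
    ultimately show ?thesis using True by (simp add: numeral_2_eq_2 algebra_simps)
  next
    case False
    then obtain m where n: "n = Suc (Suc m)" using less.prems(1)
      by (metis One_nat_def Suc_le_D le_antisym not_less_eq_eq)
    define w where "w = (\<lambda>k. zt (\<lambda>i. x (Suc i)) k)"
    have sx: "log_convex (\<lambda>i. x (Suc i))" using log_convex_shift less.prems(2) .
    have "LC (Suc (Suc m)) w"
      unfolding LC_def
    proof (intro conjI allI impI)
      fix k show "0 \<le> w k" unfolding w_def using sx by (intro zt_nonneg) (simp add: log_convex_def)
    next
      fix k assume "1 \<le> k" "k + 1 \<le> Suc (Suc m)"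
      then show "(w k)^2 \<le> w (k-1) * w (k+1)" unfolding w_def
        using less.IH[of k "\<lambda>i. x (Suc i)"] sx n by auto
    qed
    from bt_lc[OF this] show ?thesis
      using n by (simp add: zt_Suc w_def)
  qed
qed

theorem mainTheorem2:
  fixes x :: "nat \<Rightarrow> real"
  assumes "log_convex x"
  shows "log_convex (\<lambda>n. \<Sum>k=0..n. real (Stirling n k) * x k)"
proof -
  have e: "(\<lambda>n. \<Sum>k=0..n. real (Stirling n k) * x k) = zt x"
    by (simp add: zt_def fun_eq_iff)
  have "\<forall>k. x k \<ge> 0" using assms unfolding log_convex_def by auto
  then show ?thesis unfolding e log_convex_def
    using main[OF _ assms] zt_nonneg by auto
qed

end
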